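(* Let $d\ge 4$ be an integer such that there exists a Hadamard matrix of order $d$ (a $d\times d$ matrix $H_d$ with entries $\pm1$ satisfying $H_d^TH_d=d\,I_d$). Then there is an explicit construction of a $\big\lfloor\frac12\sqrt{d}\big\rfloor$-neighborly centrally symmetric $d$-dimensional polytope with $4d$ vertices.
   Context: A polytope $P\subset\mathbb{R}^d$ is centrally symmetric (cs) if $P=-P$. A cs polytope $P$ is $k$-neighborly if every set of $k$ of its vertices, no two of which are antipodes (i.e. no two of the form $v,-v$), is the vertex set of a face of $P$. *)

theory Defs
  imports "HOL-Analysis.Analysis"
begin

definition hadamard_matrix :: "real^'n^'n \<Rightarrow> bool" where
  "hadamard_matrix H \<longleftrightarrow>
     (\<forall>i j. H $ i $ j = 1 \<or> H $ i $ j = -1) \<and>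
     transpose H ** H = (of_nat CARD('n) :: real) *\<^sub>R mat 1"

definition vertices :: "'a::real_vector set \<Rightarrow> 'a set" where
  "vertices P = {v. v extreme_point_of P}"

definition centrally_symmetric :: "'a::real_vector set \<Rightarrow> bool" where
  "centrally_symmetric P \<longleftrightarrow> P = uminus ` P"

definition cs_neighborly :: "nat \<Rightarrow> 'a::real_vector set \<Rightarrow> bool" where
  "cs_neighborly k P \<longleftrightarrow>
     (\<forall>S. S \<subseteq> vertices P \<and> card S = k \<and> (\<forall>x\<in>S. -x \<notin> S) \<longrightarrow>
          (\<exists>F. F face_of P \<and> vertices F = S))"

end

theory Submission
  imports Defs
begin

lemma mv_bound:
  fixes M :: "real^'n^'m" and y :: "real^'n"
  assumes "\<And>i j. \<bar>M$i$j\<bar> \<le> r"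
  shows "\<bar>(M *v y)$i\<bar> \<le> r * (\<Sum>j\<in>UNIV. \<bar>y$j\<bar>)"
proof -
  have "\<bar>(M *v y)$i\<bar> = \<bar>\<Sum>j\<in>UNIV. M$i$j * y$j\<bar>"
    by (simp add: matrix_vector_mult_def)
  also have "\<dots> \<le> (\<Sum>j\<in>UNIV. \<bar>M$i$j * y$j\<bar>)" by (rule sum_abs)
  also have "\<dots> \<le> (\<Sum>j\<in>UNIV. r * \<bar>y$j\<bar>)"
    by (rule sum_mono) (simp add: abs_mult assms mult_right_mono)
  finally show ?thesis by (simp add: sum_distrib_left)
qed

definition prj :: "'n set \<Rightarrow> real^'n \<Rightarrow> real^'n" where
  "prj K z = (\<chi> i. if i \<in> K then z$i else 0)"

lemma prj_sum_bound:
  assumes "\<And>i. i \<in> K \<Longrightarrow> \<bar>z$i\<bar> \<le> c"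
  shows "(\<Sum>i\<in>UNIV. \<bar>prj K z $ i\<bar>) \<le> real (card K) * c"
proof -
  have "(\<Sum>i\<in>UNIV. \<bar>prj K z $ i\<bar>) = (\<Sum>i\<in>K. \<bar>z $ i\<bar>)"
    by (simp add: prj_def sum.If_cases if_distrib[of abs])
  also have "\<dots> \<le> (\<Sum>i\<in>K. c)" by (rule sum_mono) (simp add: assms)
  finally show ?thesis by simp
qed

lemma arith1:
  fixes \<alpha> \<beta> X Y :: real
  assumes "0 \<le> \<alpha>" "0 \<le> \<beta>" "\<alpha> + \<beta> \<le> 1/2" "0 \<le> X" "X \<le> \<alpha> + \<alpha> * Y" "Y \<le> \<beta> + \<beta> * X"
  shows "Y < 1"
proof -
  have ab: "\<alpha> * \<beta> \<le> 1/4"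
    using mult_mono[of \<alpha> "1/2" \<beta> "1/2"] assms by auto
  have "\<beta> * X \<le> \<beta> * (\<alpha> + \<alpha> * Y)" using assms by (simp add: mult_left_mono)
  then have "Y \<le> \<beta> + \<alpha> * \<beta> + \<alpha> * \<beta> * Y" using assms by (simp add: algebra_simps)
  then have y: "Y * (1 - \<alpha> * \<beta>) \<le> \<beta> * (1 + \<alpha>)" by (simp add: algebra_simps)
  have "2 * \<alpha> * \<beta> \<le> \<alpha>" using mult_left_mono[of "2*\<beta>" 1 \<alpha>] assms by auto
  then have s: "\<beta> * (1 + \<alpha>) < 1 - \<alpha> * \<beta>" using assms by (simp add: algebra_simps)
  show ?thesis
  proof (rule ccontr)
    assume "\<not> Y < 1"
    then have "1 - \<alpha> * \<beta> \<le> Y * (1 - \<alpha> * \<beta>)" using ab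
      using mult_right_mono[of 1 Y "1 - \<alpha> * \<beta>"] by auto
    then show False using y s by linarith
  qed
qed

lemma solve:
  fixes Q :: "real^'n^'n" and I J :: "'n set" and s t :: "real^'n" and r :: real
  assumes Qe: "\<And>i j. \<bar>Q$i$j\<bar> \<le> r" and orth: "transpose Q ** Q = mat 1" and r0: "0 \<le> r"
    and cd: "(real (card I) + real (card J)) * r \<le> 1/2"
    and s1: "\<And>i. \<bar>s$i\<bar> \<le> 1" and t1: "\<And>j. \<bar>t$j\<bar> \<le> 1"
  shows "\<exists>a. (\<forall>i\<in>I. a$i = s$i) \<and> (\<forall>j\<in>J. (transpose Q *v a)$j = t$j)
          \<and> (\<forall>i. i\<notin>I \<longrightarrow> \<bar>a$i\<bar> < 1) \<and> (\<forall>j. j\<notin>J \<longrightarrow> \<bar>(transpose Q *v a)$j\<bar> < 1)"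
proof -
  have Qt: "\<And>i j. \<bar>transpose Q$i$j\<bar> \<le> r" using Qe by (simp add: transpose_def)
  define \<alpha> where "\<alpha> = real (card I) * r"
  define \<beta> where "\<beta> = real (card J) * r"
  have a0: "0 \<le> \<alpha>" and b0: "0 \<le> \<beta>" and ab: "\<alpha> + \<beta> \<le> 1/2"
    using r0 cd by (auto simp: \<alpha>_def \<beta>_def algebra_simps)
  define L where "L = (\<lambda>p::(real^'n) \<times> (real^'n). (fst p + prj I (Q *v snd p), snd p + prj J (transpose Q *v fst p)))"
  have lin: "linear L"
    unfolding L_def linear_iff
    by (auto simp: prj_def vec_eq_iff matrix_vector_mult_def sum.distrib sum_distrib_left algebra_simps)
  have inj: "inj L"
  proof (subst linear_inj_iff_eq_0[OF lin], intro allI impI)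
    fix p :: "(real^'n) \<times> (real^'n)"
    assume "L p = 0"
    then have "fst p + prj I (Q *v snd p) = 0" "snd p + prj J (transpose Q *v fst p) = 0"
      by (auto simp: L_def prod_eq_iff)
    then have x: "fst p = - prj I (Q *v snd p)" and y: "snd p = - prj J (transpose Q *v fst p)"
      by (metis add.commute minus_unique)+
    define X where "X = (\<Sum>i\<in>UNIV. \<bar>fst p $ i\<bar>)"
    define Y where "Y = (\<Sum>i\<in>UNIV. \<bar>snd p $ i\<bar>)"
    have X0: "0 \<le> X" and Y0: "0 \<le> Y" by (auto simp: X_def Y_def intro: sum_nonneg)
    have "X \<le> real (card I) * (r * Y)" unfolding X_def x
      using prj_sum_bound[of I "Q *v snd p" "r*Y"] mv_bound[OF Qe] by (simp add: Y_def)
    then have Xb: "X \<le> \<alpha> * Y" by (simp add: \<alpha>_def)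
    have "Y \<le> real (card J) * (r * X)" unfolding Y_def y
      using prj_sum_bound[of J "transpose Q *v fst p" "r*X"] mv_bound[OF Qt] by (simp add: X_def)
    then have Yb: "Y \<le> \<beta> * X" by (simp add: \<beta>_def)
    have "\<alpha> * \<beta> \<le> 1/4"
      using mult_mono[of \<alpha> "1/2" \<beta> "1/2"] a0 b0 ab by auto
    have "X \<le> \<alpha> * (\<beta> * X)" using Xb mult_left_mono[OF Yb a0] by linarith
    then have "X * (1 - \<alpha> * \<beta>) \<le> 0" by (simp add: algebra_simps)
    moreover have "0 < 1 - \<alpha> * \<beta>" using \<open>\<alpha> * \<beta> \<le> 1/4\<close> by linarith
    ultimately have "X \<le> 0" by (simp add: mult_le_0_iff)
    with X0 have "X = 0" by linarith
    then have "Y = 0" using Yb Y0 by simp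
    show "p = 0" using \<open>X = 0\<close> \<open>Y = 0\<close> unfolding X_def Y_def
      by (simp add: prod_eq_iff vec_eq_iff sum_nonneg_eq_0_iff)
  qed
  have "surj L"
    by (rule linear_injective_imp_surjective[OF lin inj]) simp
  then obtain p where p: "L p = (prj I s, prj J t)" by (metis surjD)
  define x where "x = fst p"
  define y where "y = snd p"
  have x: "x = prj I s - prj I (Q *v y)" and y: "y = prj J t - prj J (transpose Q *v x)"
    using p by (auto simp: L_def x_def y_def prod_eq_iff vec_eq_iff prj_def algebra_simps)
  define a where "a = x + Q *v y"
  have ta: "transpose Q *v a = transpose Q *v x + y"
    by (simp add: a_def matrix_vector_right_distrib matrix_vector_mul_assoc orth)
  define X where "X = (\<Sum>i\<in>UNIV. \<bar>x $ i\<bar>)"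
  define Y where "Y = (\<Sum>i\<in>UNIV. \<bar>y $ i\<bar>)"
  have X0: "0 \<le> X" and Y0: "0 \<le> Y" by (auto simp: X_def Y_def intro: sum_nonneg)
  have Qy: "\<And>i. \<bar>(Q *v y)$i\<bar> \<le> r * Y" using mv_bound[OF Qe] Y_def by blast
  have Qx: "\<And>i. \<bar>(transpose Q *v x)$i\<bar> \<le> r * X" using mv_bound[OF Qt] X_def by blast
  have "x = prj I (s - Q *v y)" by (subst x) (simp add: prj_def vec_eq_iff)
  moreover have "\<bar>(s - Q *v y) $ i\<bar> \<le> 1 + r * Y" for i
    using s1[of i] Qy[of i] abs_triangle_ineq4[of "s$i" "(Q *v y)$i"] by simp
  ultimately have "X \<le> real (card I) * (1 + r * Y)" unfolding X_def
    using prj_sum_bound[of I "s - Q *v y" "1 + r * Y"] by simp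
  then have "r * X \<le> r * (real (card I) * (1 + r * Y))" using r0 by (rule mult_left_mono)
  then have Xb: "r * X \<le> \<alpha> + \<alpha> * (r * Y)"
    by (simp add: \<alpha>_def algebra_simps) 
  have "y = prj J (t - transpose Q *v x)" by (subst y) (simp add: prj_def vec_eq_iff)
  moreover have "\<bar>(t - transpose Q *v x) $ i\<bar> \<le> 1 + r * X" for i
    using t1[of i] Qx[of i] abs_triangle_ineq4[of "t$i" "(transpose Q *v x)$i"] by simp
  ultimately have "Y \<le> real (card J) * (1 + r * X)" unfolding Y_def
    using prj_sum_bound[of J "t - transpose Q *v x" "1 + r * X"] by simp
  then have "r * Y \<le> r * (real (card J) * (1 + r * X))" using r0 by (rule mult_left_mono)
  then have Yb: "r * Y \<le> \<beta> + \<beta> * (r * X)"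
    by (simp add: \<beta>_def algebra_simps) 
  have rY: "r * Y < 1" using arith1[OF a0 b0 ab _ Xb Yb] r0 X0 by simp
  have rX: "r * X < 1" using arith1[OF b0 a0 _ _ Yb Xb] r0 Y0 ab by simp
  show ?thesis
  proof (intro exI conjI ballI allI impI)
    fix i assume "i \<in> I" then show "a$i = s$i"
      by (subst a_def, subst x) (simp add: prj_def)
  next
    fix j assume "j \<in> J" then show "(transpose Q *v a)$j = t$j"
      by (subst ta, subst y) (simp add: prj_def)
  next
    fix i assume "i \<notin> I" then show "\<bar>a$i\<bar> < 1"
      using Qy[of i] rY by (subst a_def, subst x) (simp add: prj_def)
  next
    fix j assume "j \<notin> J" then show "\<bar>(transpose Q *v a)$j\<bar> < 1"
      using Qx[of j] rX by (subst ta, subst y) (simp add: prj_def)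
  qed
qed

lemma unit_inner_lt:
  fixes u w :: "'a::real_inner"
  assumes "norm u = 1" "norm w = 1" "u \<noteq> w"
  shows "w \<bullet> u < 1"
proof -
  have "0 < norm (u - w) ^ 2" using assms by simp
  also have "norm (u - w) ^ 2 = u \<bullet> u - 2 * (w \<bullet> u) + w \<bullet> w"
    by (simp add: power2_norm_eq_inner inner_diff inner_commute algebra_simps)
  also have "u \<bullet> u = 1" using assms by (metis power2_norm_eq_inner one_power2)
  also have "w \<bullet> w = 1" using assms by (metis power2_norm_eq_inner one_power2)
  finally show ?thesis by simp
qed

lemma vertices_hull:
  fixes V :: "'a::euclidean_space set"
  assumes "finite V" "\<And>u. u \<in> V \<Longrightarrow> norm u = 1"
  shows "vertices (convex hull V) = V"
proof
  show "vertices (convex hull V) \<subseteq> V"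
    by (auto simp: vertices_def extreme_point_of_convex_hull)
  show "V \<subseteq> vertices (convex hull V)"
  proof
    fix w assume w: "w \<in> V"
    have "convex hull (V - {w}) \<subseteq> {x. w \<bullet> x < 1}"
      by (rule hull_minimal) (use w assms unit_inner_lt in \<open>auto simp: convex_halfspace_lt\<close>)
    moreover have "w \<bullet> w = 1" using assms(2)[OF w] by (metis power2_norm_eq_inner one_power2)
    ultimately have "w \<notin> convex hull (V - {w})" by auto
    then have "w extreme_point_of convex hull (insert w (V - {w}))"
      using assms(1) by (intro extreme_point_of_convex_hull_insert) auto
    then show "w \<in> vertices (convex hull V)" using w by (simp add: vertices_def insert_absorb)
  qed
qed

lemma exposed:
  fixes V :: "'a::euclidean_space set"
  assumes "vertices (convex hull V) = V" "\<And>u. u \<in> V \<Longrightarrow> a \<bullet> u \<le> c"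
  shows "(convex hull V \<inter> {x. a \<bullet> x = c}) face_of convex hull V \<and>
         vertices (convex hull V \<inter> {x. a \<bullet> x = c}) = {u\<in>V. a \<bullet> u = c}"
proof -
  have "convex hull V \<subseteq> {x. a \<bullet> x \<le> c}"
    by (rule hull_minimal) (use assms in \<open>auto simp: convex_halfspace_le\<close>)
  then have F: "(convex hull V \<inter> {x. a \<bullet> x = c}) face_of convex hull V"
    by (intro face_of_Int_supporting_hyperplane_le) auto
  have "v extreme_point_of convex hull V \<longleftrightarrow> v \<in> V" for v
    using assms(1) by (auto simp: vertices_def)
  then show ?thesis using F
    by (auto simp: vertices_def extreme_point_of_face[OF F] hull_inc)
qed

theorem theorem1p1:
  assumes "CARD('n::finite) \<ge> 4"
    and "\<exists>H :: real^'n^'n. hadamard_matrix H"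
  shows "\<exists>P :: (real^'n) set.
           polytope P \<and> centrally_symmetric P \<and> aff_dim P = int CARD('n) \<and>
           card (vertices P) = 4 * CARD('n) \<and>
           cs_neighborly (nat \<lfloor>sqrt (real CARD('n)) / 2\<rfloor>) P"
proof -
  obtain H :: "real^'n^'n" where H: "hadamard_matrix H" using assms(2) by blast
  define d where "d = CARD('n)"
  have d4: "real d \<ge> 4" using assms(1) by (simp add: d_def)
  define r where "r = 1 / sqrt (real d)"
  have sd: "sqrt (real d) \<ge> 2" using d4 real_sqrt_le_mono[of 4 "real d"] by simp
  have r0: "0 < r" using sd d4 by (simp add: r_def)
  have d4n: "d \<ge> 4" using assms(1) by (simp add: d_def)
  have r1: "r < 1" using sd d4n unfolding r_def by (subst divide_less_eq) auto
  have ss: "sqrt (real d) * sqrt (real d) = real d" by simp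
  have rr: "r * r * real d = 1" using d4 sd ss unfolding r_def by (simp add: field_simps)
  define Q where "Q = r *\<^sub>R H"
  have Hpm: "\<bar>H$i$j\<bar> = 1" for i j
  proof -
    have "H$i$j = 1 \<or> H$i$j = -1" using H by (simp add: hadamard_matrix_def)
    then show ?thesis by auto
  qed
  have Qe: "\<bar>Q$i$j\<bar> = r" for i j using Hpm[of i j] r0 by (simp add: Q_def abs_mult)
  have HtH: "(\<Sum>k\<in>UNIV. H$k$i * H$k$j) = real d * (if i = j then 1 else 0)" for i j
  proof -
    have "(transpose H ** H) $ i $ j = (real d *\<^sub>R mat 1 :: real^'n^'n) $ i $ j"
      using H by (simp add: hadamard_matrix_def d_def)
    then show ?thesis by (simp add: matrix_matrix_mult_def transpose_def mat_def)
  qed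
  have orth: "transpose Q ** Q = mat 1"
  proof -
    have "(transpose Q ** Q) $ i $ j = mat 1 $ i $ j" for i j
    proof -
      have "(transpose Q ** Q) $ i $ j = r * r * (\<Sum>k\<in>UNIV. H$k$i * H$k$j)"
        by (simp add: matrix_matrix_mult_def transpose_def Q_def sum_distrib_left algebra_simps)
      also have "\<dots> = mat 1 $ i $ j" using rr by (simp add: HtH mat_def)
      finally show ?thesis .
    qed
    then show ?thesis by (simp add: vec_eq_iff)
  qed
  define e :: "'n \<Rightarrow> real^'n" where "e i = axis i 1" for i
  define q :: "'n \<Rightarrow> real^'n" where "q j = (\<chi> i. Q$i$j)" for j
  have e_inner: "a \<bullet> e i = a $ i" for a i by (simp add: e_def inner_axis)
  have q_inner: "a \<bullet> q j = (transpose Q *v a) $ j" for a j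
    by (simp add: q_def inner_vec_def matrix_vector_mult_def transpose_def mult.commute)
  have qq: "q j \<bullet> q j' = (if j = j' then 1 else 0)" for j j'
  proof -
    have "q j \<bullet> q j' = (transpose Q ** Q) $ j $ j'"
      by (simp add: q_def inner_vec_def matrix_matrix_mult_def transpose_def)
    then show ?thesis by (simp add: orth mat_def)
  qed
  have ne: "norm (e i) = 1" for i by (simp add: e_def)
  have nq: "norm (q j) = 1" for j using qq[of j j] by (simp add: norm_eq_sqrt_inner)
  have qi: "q j $ i = Q $ i $ j" for i j by (simp add: q_def)
  have ei: "e i $ i' = (if i' = i then 1 else 0)" for i i' by (simp add: e_def axis_def)
  have d1: "e i \<noteq> - e i'" for i i'
  proof
    assume "e i = - e i'" then have "e i $ i = (- e i') $ i" by simp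
    then show False by (simp add: ei split: if_splits)
  qed
  have d2: "e i \<noteq> q j" for i j
  proof
    assume "e i = q j" then have "e i $ i = q j $ i" by simp
    then show False using Qe[of i j] r1 by (simp add: ei qi)
  qed
  have d3: "e i \<noteq> - q j" for i j
  proof
    assume "e i = - q j" then have "e i $ i = (- q j) $ i" by simp
    then show False using Qe[of i j] r1 by (simp add: ei qi)
  qed
  have d4': "q j \<noteq> - q j'" for j j'
  proof
    assume "q j = - q j'" then have "q j \<bullet> q j' = - (q j' \<bullet> q j')" by simp
    then show False by (simp add: qq split: if_splits)
  qed
  have inj_e: "inj e" by (auto simp: inj_def e_def axis_eq_axis)
  have inj_q: "inj q"
  proof (rule injI)
    fix j j' assume "q j = q j'"
    then have "q j \<bullet> q j' = q j' \<bullet> q j'" by simp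
    then show "j = j'" by (simp add: qq split: if_splits)
  qed
  have dist: "e i \<noteq> - e i'" "- e i' \<noteq> e i" "e i \<noteq> q j" "q j \<noteq> e i" "e i \<noteq> - q j" "- q j \<noteq> e i"
    "- e i \<noteq> q j" "q j \<noteq> - e i" "- e i \<noteq> - q j" "- q j \<noteq> - e i"
    "q j \<noteq> - q j'" "- q j' \<noteq> q j" for i i' j j'
    using d1[of i i'] d2[of i j] d3[of i j] d4'[of j j'] by (metis minus_minus)+
  have inj_ne: "inj (\<lambda>i. - e i)" and inj_nq: "inj (\<lambda>j. - q j)"
    using inj_e inj_q by (auto simp: inj_def)
  define V where "V = range e \<union> range (\<lambda>i. - e i) \<union> range q \<union> range (\<lambda>j. - q j)"
  have finV: "finite V" by (simp add: V_def)
  have nV: "\<And>u. u \<in> V \<Longrightarrow> norm u = 1" using ne nq by (auto simp: V_def)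
  define P where "P = convex hull V"
  have vert: "vertices P = V" unfolding P_def by (rule vertices_hull[OF finV nV])
  have cardV: "card V = 4 * d"
  proof -
    have c1: "card (range e) = d" using inj_e by (simp add: card_image d_def)
    have c2: "card (range (\<lambda>i. - e i)) = d"
      using inj_e by (simp add: card_image d_def inj_def)
    have c3: "card (range q) = d" using inj_q by (simp add: card_image d_def)
    have c4: "card (range (\<lambda>j. - q j)) = d"
      using inj_q by (simp add: card_image d_def inj_def)
    have "card (range e \<union> range (\<lambda>i. - e i)) = 2 * d"
      using c1 c2 dist by (subst card_Un_disjoint) auto
    moreover have "card (range e \<union> range (\<lambda>i. - e i) \<union> range q) = 3 * d"
      using calculation c3 dist by (subst card_Un_disjoint) auto
    moreover have "card V = 4 * d" unfolding V_def
      using calculation c4 dist by (subst card_Un_disjoint) auto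
    ultimately show ?thesis by simp
  qed
  have symV: "uminus ` V = V"
    by (simp add: V_def image_Un image_image Un_ac)
  have cs: "centrally_symmetric P"
  proof -
    have "uminus ` P = (\<lambda>x. (-1) *\<^sub>R x) ` (convex hull V)" by (simp add: P_def)
    also have "\<dots> = convex hull ((\<lambda>x. (-1) *\<^sub>R x) ` V)" by (rule convex_hull_scaling[symmetric])
    also have "\<dots> = P" using symV by (simp add: P_def)
    finally show ?thesis by (simp add: centrally_symmetric_def)
  qed
  have aff: "aff_dim P = int d"
  proof -
    define A where "A = affine hull V"
    have affA: "affine A" by (simp add: A_def)
    obtain i0 :: 'n where True by simp
    have "e i0 \<in> A" "- e i0 \<in> A" by (auto simp: A_def V_def intro: hull_inc)
    then have "(1/2) *\<^sub>R e i0 + (1/2) *\<^sub>R (- e i0) \<in> A"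
      using affA by (intro mem_affine) auto
    then have "0 \<in> A" by simp
    then have sA: "subspace A" using affA by (simp add: subspace_affine)
    have eA: "e i \<in> A" for i by (auto simp: A_def V_def intro: hull_inc)
    have "x \<in> A" for x
    proof -
      have "(\<Sum>i\<in>UNIV. x$i *\<^sub>R e i) \<in> A"
        by (rule subspace_sum[OF sA], rule subspace_scale[OF sA eA])
      moreover have "(\<Sum>i\<in>UNIV. x$i *\<^sub>R e i) = x"
        using basis_expansion[of x] by (simp add: e_def scalar_mult_eq_scaleR)
      ultimately show ?thesis by simp
    qed
    then have "affine hull V = UNIV" by (auto simp: A_def)
    then have "aff_dim V = int DIM(real^'n)" using aff_dim_eq_full[of V] by blast
    then show ?thesis by (simp add: P_def aff_dim_convex_hull d_def)
  qed
  define k where "k = nat \<lfloor>sqrt (real d) / 2\<rfloor>"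
  have kb: "real k * r \<le> 1/2"
  proof -
    have fl0: "0 \<le> \<lfloor>sqrt (real d) / 2\<rfloor>" using sd by simp
    have "real k = real_of_int \<lfloor>sqrt (real d) / 2\<rfloor>" using fl0 by (simp add: k_def)
    also have "\<dots> \<le> sqrt (real d) / 2" by (rule of_int_floor_le)
    finally have "real k \<le> sqrt (real d) / 2" .
    then have "real k * r \<le> sqrt (real d) / 2 * r" using r0 by (simp add: mult_right_mono)
    also have "\<dots> = 1/2" using sd d4n by (simp add: r_def)
    finally show ?thesis .
  qed
  have nb: "cs_neighborly k P"
    unfolding cs_neighborly_def
  proof (intro allI impI)
    fix S assume asm: "S \<subseteq> vertices P \<and> card S = k \<and> (\<forall>x\<in>S. - x \<notin> S)"
    then have SV: "S \<subseteq> V" and cS: "card S = k" and noanti: "\<And>x. x \<in> S \<Longrightarrow> - x \<notin> S"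
      using vert by auto
    have finS: "finite S" using SV finV finite_subset by blast
    define I where "I = {i. e i \<in> S \<or> - e i \<in> S}"
    define J where "J = {j. q j \<in> S \<or> - q j \<in> S}"
    define s :: "real^'n" where "s = (\<chi> i. if e i \<in> S then 1 else -1)"
    define t :: "real^'n" where "t = (\<chi> j. if q j \<in> S then 1 else -1)"
    define f where "f i = (if e i \<in> S then e i else - e i)" for i
    define g where "g j = (if q j \<in> S then q j else - q j)" for j
    have fS: "f ` I \<subseteq> S" by (auto simp: f_def I_def)
    have gS: "g ` J \<subseteq> S" by (auto simp: g_def J_def)
    have injf: "inj_on f I"
      using inj_e inj_ne dist unfolding inj_on_def f_def inj_def by auto
    have injg: "inj_on g J"
      using inj_q inj_nq dist unfolding inj_on_def g_def inj_def by auto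
    have disj: "f ` I \<inter> g ` J = {}"
      using dist by (auto simp: f_def g_def)
    have "card I + card J = card (f ` I \<union> g ` J)"
      using injf injg disj by (simp add: card_Un_disjoint card_image)
    also have "\<dots> \<le> card S" using fS gS finS by (intro card_mono) auto
    finally have "card I + card J \<le> k" using cS by simp
    then have cdb: "(real (card I) + real (card J)) * r \<le> 1/2"
    proof -
      have "real (card I) + real (card J) \<le> real k" using \<open>card I + card J \<le> k\<close>
        by (metis of_nat_add of_nat_mono)
      then have "(real (card I) + real (card J)) * r \<le> real k * r"
        using r0 by (simp add: mult_right_mono)
      then show ?thesis using kb by linarith
    qed
    have sb: "\<And>i. \<bar>s$i\<bar> \<le> 1" by (simp add: s_def)
    have tb: "\<And>j. \<bar>t$j\<bar> \<le> 1" by (simp add: t_def)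
    have Qe': "\<And>i j. \<bar>Q$i$j\<bar> \<le> r" using Qe by simp
    obtain a where a1: "\<forall>i\<in>I. a$i = s$i" and a2: "\<forall>j\<in>J. (transpose Q *v a)$j = t$j"
      and a3: "\<forall>i. i\<notin>I \<longrightarrow> \<bar>a$i\<bar> < 1" and a4: "\<forall>j. j\<notin>J \<longrightarrow> \<bar>(transpose Q *v a)$j\<bar> < 1"
      using solve[OF Qe' orth less_imp_le[OF r0] cdb sb tb] by blast
    have key: "(u \<in> S \<longrightarrow> a \<bullet> u = 1) \<and> (u \<notin> S \<longrightarrow> a \<bullet> u < 1)" if u: "u \<in> V" for u
    proof -
      consider (E) i where "u = e i" | (NE) i where "u = - e i" | (Q) j where "u = q j" | (NQ) j where "u = - q j"
        using u by (auto simp: V_def)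
      then show ?thesis
      proof cases
        case E
        then show ?thesis using a1 a3 noanti[of "e i"] noanti[of "- e i"]
          by (cases "i \<in> I") (auto simp: e_inner s_def I_def)
      next
        case NE
        then show ?thesis using a1 a3 noanti[of "e i"] noanti[of "- e i"]
          by (cases "i \<in> I") (auto simp: e_inner s_def I_def)
      next
        case Q
        then show ?thesis using a2 a4 noanti[of "q j"] noanti[of "- q j"]
          by (cases "j \<in> J") (auto simp: q_inner t_def J_def)
      next
        case NQ
        then show ?thesis using a2 a4 noanti[of "q j"] noanti[of "- q j"]
          by (cases "j \<in> J") (auto simp: q_inner t_def J_def)
      qed
    qed
    have le: "\<And>u. u \<in> V \<Longrightarrow> a \<bullet> u \<le> 1" using key by force
    have Seq: "{u\<in>V. a \<bullet> u = 1} = S" using key SV by force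
    have vV: "vertices (convex hull V) = V" using vert by (simp add: P_def)
    show "\<exists>F. F face_of P \<and> vertices F = S"
      using exposed[OF vV le] Seq unfolding P_def by blast
  qed
  show ?thesis
    using P_def finV cs aff cardV vert nb
    by (intro exI[of _ P]) (auto simp: polytope_def d_def k_def)
qed

end
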